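(* Let $n\ge1$ and let $X$ be a lazy simple random walk on the cycle $\mathbb{Z}_n=\{0,1,\dots,n-1\}$. Then for every $\alpha\in(0,1)$, \[ t_{\mathrm{H}}(\alpha)=t_{\mathrm{mov}}(\alpha). \]
   Context: The lazy simple random walk on $\mathbb{Z}_n$ stays put with probability $1/2$ and otherwise moves to $x+1$ or $x-1$ (mod $n$) with probability $1/4$ each; $\pi$ denotes its stationary (uniform) distribution. For a set $A$, $\tau_A=\inf\{t\ge0:X_t\in A\}$ and $t_{\mathrm{H}}(\alpha)=\max_{x,\,A:\pi(A)\ge\alpha}\mathbb{E}_x[\tau_A]$. Let $\mathcal{A}(\alpha)$ be the set of sequences $A=(A_t)_{t\ge0}$ of subsets of $\mathbb{Z}_n$ with $\pi(A_t)\ge\alpha$ for all $t$; for such $A$ let $\tau_A=\inf\{t\ge0:X_t\in A_t\}$ and $t_{\mathrm{mov}}(\alpha)=\sup_{x,\,A\in\mathcal{A}(\alpha)}\mathbb{E}_x[\tau_A]$. *)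

theory Defs
  imports "HOL-Analysis.Analysis"
begin

text \<open>The cycle Z_n is represented by the states {0..<n} (naturals), with arithmetic mod n.\<close>

definition lazy_P :: "nat \<Rightarrow> nat \<Rightarrow> nat \<Rightarrow> real" where
  "lazy_P n x y =
     (if y = x then 1/2 else 0)
   + (if y = (x + 1) mod n then 1/4 else 0)
   + (if y = (x + n - 1) mod n then 1/4 else 0)"

definition unif :: "nat \<Rightarrow> nat set \<Rightarrow> real" where
  "unif n A = real (card (A \<inter> {0..<n})) / real n"

text \<open>killed n A x t y = P_x(X_t = y and tau_A > t), where tau_A = inf {t. X_t \<in> A t}.\<close>
fun killed :: "nat \<Rightarrow> (nat \<Rightarrow> nat set) \<Rightarrow> nat \<Rightarrow> nat \<Rightarrow> nat \<Rightarrow> real" where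
  "killed n A x 0 y = (if y = x \<and> y \<notin> A 0 then 1 else 0)"
| "killed n A x (Suc t) y =
     (if y \<in> A (Suc t) then 0 else (\<Sum>z<n. killed n A x t z * lazy_P n z y))"

text \<open>E_x[tau_A] = sum over t of P_x(tau_A > t) (tail-sum formula for N-valued variables),
  valued in [0,\<infinity>].\<close>
definition exp_hit :: "nat \<Rightarrow> (nat \<Rightarrow> nat set) \<Rightarrow> nat \<Rightarrow> ennreal" where
  "exp_hit n A x = (\<Sum>t. ennreal (\<Sum>y<n. killed n A x t y))"

definition t_H :: "nat \<Rightarrow> real \<Rightarrow> ennreal" where
  "t_H n \<alpha> = (SUP (x, B) \<in> {(x, B). x < n \<and> B \<subseteq> {0..<n} \<and> unif n B \<ge> \<alpha>}.
                 exp_hit n (\<lambda>_. B) x)"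

definition t_mov :: "nat \<Rightarrow> real \<Rightarrow> ennreal" where
  "t_mov n \<alpha> = (SUP (x, A) \<in> {(x, A). x < n \<and> (\<forall>t. A t \<subseteq> {0..<n} \<and> unif n (A t) \<ge> \<alpha>)}.
                 exp_hit n A x)"

end

theory Submission
  imports Defs
begin

definition Maj :: "nat \<Rightarrow> (nat \<Rightarrow> real) \<Rightarrow> (nat \<Rightarrow> real) \<Rightarrow> bool" where
  "Maj n f c \<longleftrightarrow> (\<forall>S. S \<subseteq> {0..<n} \<longrightarrow> sum f S \<le> c (card S))"

definition conc :: "nat \<Rightarrow> (nat \<Rightarrow> real) \<Rightarrow> bool" where
  "conc n c \<longleftrightarrow> (\<forall>i. 1 \<le> i \<longrightarrow> i < n \<longrightarrow> c (Suc i) - c i \<le> c i - c (i - 1))"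

definition monoc :: "nat \<Rightarrow> (nat \<Rightarrow> real) \<Rightarrow> bool" where
  "monoc n c \<longleftrightarrow> (\<forall>i. i < n \<longrightarrow> c i \<le> c (Suc i))"

definition tr2 :: "nat \<Rightarrow> (nat \<Rightarrow> real) \<Rightarrow> nat \<Rightarrow> real" where
  "tr2 n c j = (if j = 0 then 0 else if n \<le> j then c n else (c (Suc j) + c (j - 1)) / 2)"

lemma conc_incr:
  assumes "conc n c" "p \<le> q" "q < n"
  shows "c (Suc q) - c q \<le> c (Suc p) - c p"
  using assms(2,3)
proof (induction q)
  case 0 then show ?case by simp
next
  case (Suc q)
  show ?case
  proof (cases "p = Suc q")
    case True then show ?thesis by simp
  next
    case False
    then have "p \<le> q" using Suc by simp
    then have "c (Suc q) - c q \<le> c (Suc p) - c p" using Suc by simp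
    moreover have "c (Suc (Suc q)) - c (Suc q) \<le> c (Suc q) - c q"
      using assms(1) Suc(3) unfolding conc_def by (metis diff_Suc_1 le_add1 plus_1_eq_Suc)
    ultimately show ?thesis by linarith
  qed
qed

lemma mono_le:
  assumes "monoc n c" "i \<le> j" "j \<le> n"
  shows "c i \<le> c j"
  using assms(2,3)
proof (induction j)
  case 0 then show ?case by simp
next
  case (Suc j)
  show ?case
  proof (cases "i = Suc j")
    case True then show ?thesis by simp
  next
    case False
    then have "c i \<le> c j" using Suc by simp
    moreover have "c j \<le> c (Suc j)" using assms(1) Suc(3) unfolding monoc_def by simp
    ultimately show ?thesis by linarith
  qed
qed

lemma conc_pair_aux:
  assumes "conc n c"
  shows "\<forall>a. a = Suc j + d \<longrightarrow> a \<le> n \<longrightarrow> a \<le> 2*j \<longrightarrow> c a + c (2*j - a) \<le> c (Suc j) + c (j - 1)"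
proof (induction d)
  case 0
  then show ?case by (auto simp: numeral_2_eq_2)
next
  case (Suc d)
  show ?case
  proof (intro allI impI)
    fix a assume a: "a = Suc j + Suc d" "a \<le> n" "a \<le> 2*j"
    define a0 where "a0 = Suc j + d"
    have IH: "c a0 + c (2*j - a0) \<le> c (Suc j) + c (j - 1)"
      using Suc a unfolding a0_def by simp
    define b where "b = 2*j - a0"
    have b1: "b \<ge> 1" using a unfolding b_def a0_def by simp
    have "c (Suc a0) - c a0 \<le> c (Suc (b - 1)) - c (b - 1)"
      by (rule conc_incr[OF assms]) (use a in \<open>auto simp: b_def a0_def\<close>)
    moreover have "Suc (b - 1) = b" using b1 by simp
    moreover have "2*j - a = b - 1" using a unfolding b_def a0_def by simp
    moreover have "a = Suc a0" using a unfolding a0_def by simp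
    ultimately show "c a + c (2*j - a) \<le> c (Suc j) + c (j - 1)"
      using IH unfolding b_def by simp
  qed
qed

lemma conc_pair:
  assumes "conc n c" "Suc j \<le> a" "a \<le> n" "a \<le> 2*j"
  shows "c a + c (2*j - a) \<le> c (Suc j) + c (j - 1)"
proof -
  obtain d where "a = Suc j + d" using assms(2) le_Suc_ex by blast
  then show ?thesis using conc_pair_aux[OF assms(1), of j d] assms by blast
qed

lemma tr2_props:
  assumes n1: "1 \<le> n" and c0: "c 0 = 0" and cc: "conc n c" and cm: "monoc n c"
  shows "tr2 n c 0 = 0" "conc n (tr2 n c)" "monoc n (tr2 n c)"
proof -
  show "tr2 n c 0 = 0" by (simp add: tr2_def)
  show "monoc n (tr2 n c)"
    unfolding monoc_def
  proof (intro allI impI)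
    fix i assume i: "i < n"
    have m5: "c 1 \<ge> 0" using mono_le[OF cm, of 0 1] c0 n1 by simp
    consider "i = 0" "n = 1" | "i = 0" "n \<ge> 2" | "i \<ge> 1" "Suc i = n" | "i \<ge> 1" "Suc i < n"
      using i n1 by linarith
    then show "tr2 n c i \<le> tr2 n c (Suc i)"
    proof cases
      case 1 then show ?thesis using m5 by (simp add: tr2_def)
    next
      case 2
      have "c 2 \<ge> 0" using mono_le[OF cm, of 0 2] c0 2 by simp
      then show ?thesis using 2 c0 by (simp add: tr2_def numeral_2_eq_2)
    next
      case 3
      have "c (i - 1) \<le> c n" using mono_le[OF cm, of "i - 1" n] 3 by simp
      then show ?thesis using 3 by (simp add: tr2_def)
    next
      case 4
      have "c (i - 1) \<le> c i" using mono_le[OF cm, of "i - 1" i] 4 by simp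
      moreover have "c (Suc i) \<le> c (Suc (Suc i))" using mono_le[OF cm, of "Suc i" "Suc (Suc i)"] 4 by simp
      ultimately show ?thesis using 4 by (simp add: tr2_def)
    qed
  qed
  show "conc n (tr2 n c)"
    unfolding conc_def
  proof (intro allI impI)
    fix i assume i: "1 \<le> i" "i < n"
    have ci: "\<And>q. 1 \<le> q \<Longrightarrow> q < n \<Longrightarrow> c (Suc q) - c q \<le> c q - c (q - 1)"
      using cc unfolding conc_def by blast
    consider "i = 1" "n = 2" | "i = 1" "n > 2" | "i > 1" "Suc i = n" | "i > 1" "Suc i < n"
      using i by linarith
    then show "tr2 n c (Suc i) - tr2 n c i \<le> tr2 n c i - tr2 n c (i - 1)"
    proof cases
      case 1 then show ?thesis using c0 by (simp add: tr2_def numeral_2_eq_2)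
    next
      case 2
      have "c 3 - c 2 \<le> c 2 - c 1" using ci[of 2] 2 by (simp add: numeral_3_eq_3 numeral_2_eq_2)
      then show ?thesis using 2 c0 by (simp add: tr2_def numeral_3_eq_3 numeral_2_eq_2)
    next
      case 3
      obtain q where q: "i = Suc (Suc q)" using 3 by (metis Suc_lessE One_nat_def Suc_pred less_imp_Suc_add)
      have "c (Suc (Suc q)) - c (Suc q) \<le> c (Suc q) - c q" using ci[of "Suc q"] 3 q by simp
      then show ?thesis using 3 q unfolding tr2_def by (simp add: field_simps)
    next
      case 4
      obtain q where q: "i = Suc q" using 4 by (metis Suc_pred less_imp_le_nat not_one_le_zero zero_less_iff_neq_zero)
      have a: "c (Suc (Suc i)) - c (Suc i) \<le> c (Suc i) - c i" using ci[of "Suc i"] 4 by simp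
      have b: "c i - c q \<le> c q - c (q - 1)" using ci[of q] 4 q by simp
      show ?thesis
      proof (cases "q = 0")
        case True then show ?thesis using 4 q a c0 by (simp add: tr2_def)
      next
        case False then show ?thesis using 4 q a b by (simp add: tr2_def field_simps)
      qed
    qed
  qed
qed

lemma trunc_props:
  assumes "conc n c" "monoc n c" "m \<le> n"
  shows "conc n (\<lambda>j. c (min j m))" "monoc n (\<lambda>j. c (min j m))"
proof -
  show "monoc n (\<lambda>j. c (min j m))"
    unfolding monoc_def
  proof (intro allI impI)
    fix i assume "i < n"
    then show "c (min i m) \<le> c (min (Suc i) m)"
      using mono_le[OF assms(2), of "min i m" "min (Suc i) m"] assms(3) by simp
  qed
  show "conc n (\<lambda>j. c (min j m))"
    unfolding conc_def
  proof (intro allI impI)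
    fix i assume i: "1 \<le> i" "i < n"
    show "c (min (Suc i) m) - c (min i m) \<le> c (min i m) - c (min (i - 1) m)"
    proof (cases "Suc i \<le> m")
      case True then show ?thesis using assms(1) i unfolding conc_def by simp
    next
      case False
      then have "min (Suc i) m = m" "min i m = m" by auto
      moreover have "c (min (i - 1) m) \<le> c m" using mono_le[OF assms(2), of "min (i - 1) m" m] assms(3) by simp
      ultimately show ?thesis by simp
    qed
  qed
qed


lemma Maj_Q:
  assumes n1: "1 \<le> n" and sig: "\<And>y. y < n \<Longrightarrow> \<sigma> y < n" and inj: "inj_on \<sigma> {0..<n}"
    and noinv: "\<And>S. S \<subseteq> {0..<n} \<Longrightarrow> \<sigma> ` S = S \<Longrightarrow> S = {} \<or> S = {0..<n}"
    and M: "Maj n f c" and c0: "c 0 = 0" and cc: "conc n c" and cm: "monoc n c"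
  shows "Maj n (\<lambda>y. (f y + f (\<sigma> y)) / 2) (tr2 n c)"
  unfolding Maj_def
proof (intro allI impI)
  fix S assume S: "S \<subseteq> {0..<n}"
  have fin: "finite S" using S finite_subset by blast
  have sS: "\<sigma> ` S \<subseteq> {0..<n}" using S sig by auto
  have injS: "inj_on \<sigma> S" using inj S inj_on_subset by blast
  have cardsS: "card (\<sigma> ` S) = card S" using injS card_image by blast
  have e1: "sum (\<lambda>y. (f y + f (\<sigma> y)) / 2) S = (sum f S + sum f (\<sigma> ` S)) / 2"
    using sum.reindex[OF injS, of f] by (simp add: sum.distrib flip: sum_divide_distrib)
  have e2: "sum f S + sum f (\<sigma> ` S) = sum f (S \<union> \<sigma> ` S) + sum f (S \<inter> \<sigma> ` S)"
    using sum.union_inter[of S "\<sigma> ` S" f] fin by simp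
  have cU: "card (S \<union> \<sigma> ` S) + card (S \<inter> \<sigma> ` S) = 2 * card S"
    using card_Un_Int[of S "\<sigma> ` S"] fin cardsS by simp
  have cUn: "card (S \<union> \<sigma> ` S) \<le> n" using card_mono[of "{0..<n}" "S \<union> \<sigma> ` S"] S sS by simp
  show "sum (\<lambda>y. (f y + f (\<sigma> y)) / 2) S \<le> tr2 n c (card S)"
  proof (cases "S = {}")
    case True then show ?thesis by (simp add: tr2_def)
  next
    case ne: False
    show ?thesis
    proof (cases "S = {0..<n}")
      case True
      have "\<sigma> ` S = S" using card_subset_eq[of S "\<sigma> ` S"] sS cardsS fin True by simp
      then have "sum (\<lambda>y. (f y + f (\<sigma> y)) / 2) S = sum f S" using e1 by simp
      moreover have "sum f S \<le> c (card S)" using M S unfolding Maj_def by blast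
      ultimately show ?thesis using True n1 by (simp add: tr2_def)
    next
      case False
      have j1: "card S \<ge> 1" using ne fin by (simp add: Suc_leI card_gt_0_iff)
      have jn: "card S < n" using psubset_card_mono[of "{0..<n}" S] S False by auto
      have "\<sigma> ` S \<noteq> S" using noinv[OF S] ne False by blast
      then have "\<not> \<sigma> ` S \<subseteq> S" using card_subset_eq[of S "\<sigma> ` S"] fin cardsS by blast
      then have "S \<subset> S \<union> \<sigma> ` S" by blast
      then have cgt: "card (S \<union> \<sigma> ` S) \<ge> Suc (card S)"
        using psubset_card_mono[of "S \<union> \<sigma> ` S" S] fin by simp
      have b1: "sum f (S \<union> \<sigma> ` S) \<le> c (card (S \<union> \<sigma> ` S))" using M S sS unfolding Maj_def by auto
      have b2: "sum f (S \<inter> \<sigma> ` S) \<le> c (card (S \<inter> \<sigma> ` S))"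
        using M S unfolding Maj_def by (meson Int_lower1 order_trans)
      have ci: "card (S \<inter> \<sigma> ` S) = 2 * card S - card (S \<union> \<sigma> ` S)" using cU by simp
      have "c (card (S \<union> \<sigma> ` S)) + c (2 * card S - card (S \<union> \<sigma> ` S)) \<le> c (Suc (card S)) + c (card S - 1)"
        by (rule conc_pair[OF cc cgt cUn]) (use cU in simp)
      then show ?thesis using e1 e2 b1 b2 ci j1 jn by (simp add: tr2_def)
    qed
  qed
qed

definition sp :: "nat \<Rightarrow> nat \<Rightarrow> nat" where "sp n y = (y + n - 1) mod n"
definition sm :: "nat \<Rightarrow> nat \<Rightarrow> nat" where "sm n y = (y + 1) mod n"

lemma sp_lt: "1 \<le> n \<Longrightarrow> sp n y < n" by (simp add: sp_def)
lemma sm_lt: "1 \<le> n \<Longrightarrow> sm n y < n" by (simp add: sm_def)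

lemma sp_sm: assumes "y < n" shows "sp n (sm n y) = y"
proof (cases "Suc y = n")
  case True then show ?thesis by (simp add: sp_def sm_def)
next
  case False
  then have "(y + 1) mod n = y + 1" using assms by simp
  then show ?thesis using assms by (simp add: sp_def sm_def)
qed

lemma sm_sp: assumes "y < n" shows "sm n (sp n y) = y"
proof (cases "y = 0")
  case True
  then show ?thesis using assms by (simp add: sp_def sm_def)
next
  case False
  then have "(y + n - 1) mod n = y - 1"
    using assms by (metis Nat.add_diff_assoc2 One_nat_def Suc_leI le_add_diff_inverse2 less_imp_diff_less
        mod_add_self2 mod_less not_gr_zero)
  then show ?thesis using assms False by (simp add: sp_def sm_def)
qed

lemma sm_closed:
  assumes S: "S \<subseteq> {0..<n}" and inv: "sm n ` S \<subseteq> S" and y: "y \<in> S"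
  shows "(y + k) mod n \<in> S"
proof (induction k)
  case 0 then show ?case using y S by auto
next
  case (Suc k)
  have "sm n ((y + k) mod n) \<in> S" using inv Suc by blast
  moreover have "sm n ((y + k) mod n) = (y + Suc k) mod n" by (simp add: sm_def mod_Suc_eq)
  ultimately show ?case by simp
qed

lemma sm_noinv:
  assumes S: "S \<subseteq> {0..<n}" and inv: "sm n ` S = S"
  shows "S = {} \<or> S = {0..<n}"
proof (cases "S = {}")
  case False
  then obtain y where y: "y \<in> S" by blast
  have yn: "y < n" using y S by auto
  have "z \<in> S" if "z < n" for z
  proof -
    have "(y + (n - y + z)) mod n \<in> S" using sm_closed[OF S _ y] inv by blast
    moreover have "y + (n - y + z) = n + z" using yn by simp
    ultimately show ?thesis using that by simp
  qed
  then show ?thesis using S by auto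
qed simp

lemma sp_noinv:
  assumes S: "S \<subseteq> {0..<n}" and inv: "sp n ` S = S"
  shows "S = {} \<or> S = {0..<n}"
proof -
  have "sm n ` S = S"
  proof
    show "sm n ` S \<subseteq> S"
    proof
      fix w assume "w \<in> sm n ` S"
      then obtain y where y: "y \<in> S" "w = sm n y" by blast
      then obtain z where z: "z \<in> S" "y = sp n z" using inv by blast
      have "z < n" using z S by auto
      then have "sm n (sp n z) = z" by (rule sm_sp)
      then show "w \<in> S" using y z by simp
    qed
    show "S \<subseteq> sm n ` S"
    proof
      fix y assume y: "y \<in> S"
      have "y < n" using y S by auto
      then have "sm n (sp n y) = y" by (rule sm_sp)
      moreover have "sp n y \<in> S" using inv y by blast
      ultimately show "y \<in> sm n ` S" by (metis image_eqI)
    qed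
  qed
  then show ?thesis using sm_noinv[OF S] by blast
qed

lemma inj_sm: "inj_on (sm n) {0..<n}"
proof (rule inj_onI)
  fix a b assume "a \<in> {0..<n}" "b \<in> {0..<n}" "sm n a = sm n b"
  then have "a < n" "b < n" by auto
  then have "a = sp n (sm n a)" "b = sp n (sm n b)" using sp_sm by metis+
  then show "a = b" using \<open>sm n a = sm n b\<close> by metis
qed
lemma inj_sp: "inj_on (sp n) {0..<n}"
proof (rule inj_onI)
  fix a b assume "a \<in> {0..<n}" "b \<in> {0..<n}" "sp n a = sp n b"
  then have "a < n" "b < n" by auto
  then have "a = sm n (sp n a)" "b = sm n (sp n b)" using sm_sp by metis+
  then show "a = b" using \<open>sp n a = sp n b\<close> by metis
qed

definition Pstep :: "nat \<Rightarrow> (nat \<Rightarrow> real) \<Rightarrow> nat \<Rightarrow> real" where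
  "Pstep n f y = f y / 2 + f (sp n y) / 4 + f (sm n y) / 4"

lemma Maj_P:
  assumes n1: "1 \<le> n" and M: "Maj n f c" and c0: "c 0 = 0" and cc: "conc n c" and cm: "monoc n c"
  shows "Maj n (Pstep n f) (tr2 n (tr2 n c))"
proof -
  let ?g = "\<lambda>y. (f y + f (sp n y)) / 2"
  have M1: "Maj n ?g (tr2 n c)"
    by (rule Maj_Q[OF n1 sp_lt[OF n1] inj_sp sp_noinv M c0 cc cm])
  note P = tr2_props[OF n1 c0 cc cm]
  have M2: "Maj n (\<lambda>y. (?g y + ?g (sm n y)) / 2) (tr2 n (tr2 n c))"
    by (rule Maj_Q[OF n1 sm_lt[OF n1] inj_sm sm_noinv M1 P])
  have eq: "(?g y + ?g (sm n y)) / 2 = Pstep n f y" if "y < n" for y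
    using sp_sm[OF that] by (simp add: Pstep_def field_simps)
  show ?thesis unfolding Maj_def
  proof (intro allI impI)
    fix S assume S: "S \<subseteq> {0..<n}"
    have "sum (Pstep n f) S = sum (\<lambda>y. (?g y + ?g (sm n y)) / 2) S"
      by (rule sum.cong) (use S eq in auto)
    then show "sum (Pstep n f) S \<le> tr2 n (tr2 n c) (card S)" using M2 S unfolding Maj_def by simp
  qed
qed

lemma lazy_sum:
  assumes n1: "1 \<le> n" and y: "y < n"
  shows "(\<Sum>z<n. f z * lazy_P n z y) = Pstep n f y"
proof -
  have a: "(\<Sum>z<n. f z * lazy_P n z y) =
     (\<Sum>z<n. (if z = y then f z / 2 else 0)) + (\<Sum>z<n. (if z = sp n y then f z / 4 else 0))
     + (\<Sum>z<n. (if z = sm n y then f z / 4 else 0))"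
  proof -
    have "f z * lazy_P n z y = (if z = y then f z / 2 else 0) + (if z = sp n y then f z / 4 else 0)
        + (if z = sm n y then f z / 4 else 0)" if z: "z < n" for z
    proof -
      have e1: "(y = (z + 1) mod n) = (z = sp n y)"
        using sp_sm[OF z] sm_sp[OF y] unfolding sm_def by metis
      have e2: "(y = (z + n - 1) mod n) = (z = sm n y)"
        using sm_sp[OF z] sp_sm[OF y] unfolding sp_def by metis
      show ?thesis unfolding lazy_P_def e1 e2 by (auto simp: algebra_simps)
    qed
    then show ?thesis by (simp add: sum.distrib)
  qed
  show ?thesis unfolding a using y sp_lt[OF n1] sm_lt[OF n1] by (simp add: Pstep_def)
qed

lemma killed_Suc:
  assumes "1 \<le> n" "y < n"
  shows "killed n A x (Suc t) y = (if y \<in> A (Suc t) then 0 else Pstep n (killed n A x t) y)"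
  using lazy_sum[OF assms] by simp

lemma lazy_nonneg: "lazy_P n z y \<ge> 0" by (simp add: lazy_P_def)

lemma killed_nonneg: "killed n A x t y \<ge> 0"
  by (induction t arbitrary: y) (auto intro!: sum_nonneg mult_nonneg_nonneg simp: lazy_nonneg)


definition arc :: "nat \<Rightarrow> int \<Rightarrow> nat \<Rightarrow> nat set" where
  "arc n a j = {y. y < n \<and> (int y - a) mod int n < int j}"
definition lo :: "nat \<Rightarrow> int" where "lo j = - ((int j - 1) div 2)"
definition Tn :: "nat \<Rightarrow> nat \<Rightarrow> nat set" where "Tn n j = arc n (lo j) j"
definition G :: "nat \<Rightarrow> (nat \<Rightarrow> real) \<Rightarrow> int \<Rightarrow> real" where "G n f b = f (nat (b mod int n))"

lemma arc_bij:
  assumes n1: "1 \<le> n" and jn: "j \<le> n"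
  shows "bij_betw (\<lambda>i. nat ((a + int i) mod int n)) {..<j} (arc n a j)"
proof (rule bij_betw_byWitness[where f' = "\<lambda>y. nat ((int y - a) mod int n)"])
  have np: "int n > 0" using n1 by simp
  show "\<forall>i\<in>{..<j}. nat ((int (nat ((a + int i) mod int n)) - a) mod int n) = i"
  proof
    fix i assume "i \<in> {..<j}"
    then have i: "int i < int n" using jn by simp
    have "int (nat ((a + int i) mod int n)) = (a + int i) mod int n" using np by simp
    moreover have "((a + int i) mod int n - a) mod int n = int i"
      using i by (simp add: mod_diff_left_eq)
    ultimately show "nat ((int (nat ((a + int i) mod int n)) - a) mod int n) = i" by simp
  qed
  show "\<forall>y\<in>arc n a j. nat ((a + int (nat ((int y - a) mod int n))) mod int n) = y"
  proof
    fix y assume y: "y \<in> arc n a j"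
    have "int (nat ((int y - a) mod int n)) = (int y - a) mod int n" using np by simp
    moreover have "(a + (int y - a) mod int n) mod int n = int y"
      using y by (simp add: mod_add_right_eq arc_def)
    ultimately show "nat ((a + int (nat ((int y - a) mod int n))) mod int n) = y" by simp
  qed
  show "(\<lambda>i. nat ((a + int i) mod int n)) ` {..<j} \<subseteq> arc n a j"
  proof
    fix y assume "y \<in> (\<lambda>i. nat ((a + int i) mod int n)) ` {..<j}"
    then obtain i where i: "i < j" "y = nat ((a + int i) mod int n)" by auto
    have iy: "int y = (a + int i) mod int n" using np i by simp
    have "(int y - a) mod int n = int i" using iy i jn by (simp add: mod_diff_left_eq)
    moreover have "y < n" using iy np by (simp add: nat_less_iff i(2))
    ultimately show "y \<in> arc n a j" using i by (simp add: arc_def)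
  qed
  show "(\<lambda>y. nat ((int y - a) mod int n)) ` arc n a j \<subseteq> {..<j}"
    using np by (auto simp: arc_def nat_less_iff)
qed

lemma arc_sum:
  assumes "1 \<le> n" "j \<le> n"
  shows "sum f (arc n a j) = (\<Sum>i<j. G n f (a + int i))"
  using sum.reindex_bij_betw[OF arc_bij[OF assms, of a], of f] by (simp add: G_def)

lemma arc_card:
  assumes "1 \<le> n" "j \<le> n"
  shows "card (arc n a j) = j"
  using bij_betw_same_card[OF arc_bij[OF assms, of a]] by simp

lemma arc_full: "1 \<le> n \<Longrightarrow> arc n a n = {0..<n}"
  by (auto simp: arc_def)

lemma G_per: "G n f (b + int n) = G n f b" by (simp add: G_def)

lemma G_full: "1 \<le> n \<Longrightarrow> (\<Sum>i<n. G n f (a + int i)) = sum f {0..<n}"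
  using arc_sum[of n n f a] arc_full[of n a] by simp

lemma sp_G: assumes n1: "1 \<le> n" shows "sp n (nat (b mod int n)) = nat ((b - 1) mod int n)"
proof -
  have np: "int n > 0" using n1 by simp
  define x where "x = nat (b mod int n)"
  have ix: "int x = b mod int n" using np by (simp add: x_def)
  have "int (sp n x) = int (x + n - 1) mod int n" by (simp add: sp_def of_nat_mod)
  also have "int (x + n - 1) = int x + int n - 1" using n1 by simp
  also have "(int x + int n - 1) mod int n = (b - 1) mod int n"
    unfolding ix by (metis add.commute add_diff_eq mod_add_left_eq mod_add_self1)
  finally show ?thesis unfolding x_def[symmetric] by (metis nat_int)
qed

lemma sm_G: assumes n1: "1 \<le> n" shows "sm n (nat (b mod int n)) = nat ((b + 1) mod int n)"
proof -
  have np: "int n > 0" using n1 by simp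
  define x where "x = nat (b mod int n)"
  have ix: "int x = b mod int n" using np by (simp add: x_def)
  have "int (sm n x) = int (x + 1) mod int n" by (simp add: sm_def of_nat_mod)
  also have "int (x + 1) mod int n = (b + 1) mod int n"
    unfolding of_nat_add ix by (simp add: mod_add_left_eq)
  finally show ?thesis unfolding x_def[symmetric] by (metis nat_int)
qed

lemma G_P: "1 \<le> n \<Longrightarrow> G n (Pstep n f) b = G n f b / 2 + G n f (b - 1) / 4 + G n f (b + 1) / 4"
  by (simp add: G_def Pstep_def sp_G sm_G)

lemma lo_SS: "lo (Suc (Suc j)) = lo j - 1" by (simp add: lo_def)
lemma lo_Suc: "lo (Suc j) = lo j \<or> lo (Suc j) = lo j - 1" by (simp add: lo_def) presburger

lemma Tn_sub: "Tn n j \<subseteq> {0..<n}" by (auto simp: Tn_def arc_def)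
lemma Tn_0: "Tn n 0 = {}"
proof -
  have "\<not> ((int x - lo 0) mod int n < 0)" if "x < n" for x
    using that by (simp add: not_less)
  then show ?thesis by (auto simp: Tn_def arc_def)
qed
lemma Tn_n: "1 \<le> n \<Longrightarrow> Tn n n = {0..<n}" by (simp add: Tn_def arc_full)

lemma Tn_Suc: "Tn n j \<subseteq> Tn n (Suc j)"
proof
  fix y assume y: "y \<in> Tn n j"
  then have yn: "y < n" and u: "(int y - lo j) mod int n < int j" by (auto simp: Tn_def arc_def)
  consider "lo (Suc j) = lo j" | "lo (Suc j) = lo j - 1" using lo_Suc by blast
  then show "y \<in> Tn n (Suc j)"
  proof cases
    case 1 then show ?thesis using yn u by (simp add: Tn_def arc_def)
  next
    case 2
    have e: "int y - lo (Suc j) = (int y - lo j) + 1" by (simp add: 2)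
    have "(int y - lo (Suc j)) mod int n = ((int y - lo j) mod int n + 1) mod int n"
      unfolding e by (simp add: mod_add_left_eq)
    also have "\<dots> \<le> (int y - lo j) mod int n + 1"
      by (rule zmod_le_nonneg_dividend) (use yn in simp)
    finally show ?thesis using yn u by (simp add: Tn_def arc_def)
  qed
qed

lemma Tn_mono: "i \<le> j \<Longrightarrow> Tn n i \<subseteq> Tn n j"
  using lift_Suc_mono_le[of "Tn n", OF Tn_Suc] by blast

lemma zero_T1: "1 \<le> n \<Longrightarrow> 0 \<in> Tn n 1" by (simp add: Tn_def arc_def lo_def)

lemma Tn_sum: "1 \<le> n \<Longrightarrow> j \<le> n \<Longrightarrow> sum f (Tn n j) = (\<Sum>i<j. G n f (lo j + int i))"
  unfolding Tn_def by (rule arc_sum)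

lemma Tn_card: "1 \<le> n \<Longrightarrow> j \<le> n \<Longrightarrow> card (Tn n j) = j"
  unfolding Tn_def by (rule arc_card)


definition Sg :: "(int \<Rightarrow> real) \<Rightarrow> int \<Rightarrow> nat \<Rightarrow> real" where
  "Sg g a j = (\<Sum>i<j. g (a + int i))"

lemma Sg_Suc: "Sg g a (Suc j) = Sg g a j + g (a + int j)"
  by (simp add: Sg_def)
lemma Sg_0: "Sg g a 0 = 0" by (simp add: Sg_def)

lemma tr2_cong: "(\<And>j. j \<le> n \<Longrightarrow> c j = d j) \<Longrightarrow> tr2 n c = tr2 n d"
  by (rule ext) (simp add: tr2_def)

lemma tt_mid: "2 \<le> i \<Longrightarrow> i + 2 \<le> n \<Longrightarrow> tr2 n (tr2 n c) i = (c (i+2) + 2 * c i + c (i-2)) / 4"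
proof -
  assume a: "2 \<le> i" "i + 2 \<le> n"
  define p where "p = i - 2"
  have p: "i = Suc (Suc p)" using a by (simp add: p_def)
  show ?thesis using a unfolding p by (simp add: tr2_def field_simps)
qed

lemma tt_one: "3 \<le> n \<Longrightarrow> tr2 n (tr2 n c) 1 = (c 3 + c 1) / 4"
  by (simp add: tr2_def eval_nat_numeral field_simps)

lemma tt_last: assumes "3 \<le> n" shows "tr2 n (tr2 n c) (n - 1) = c n / 2 + c (n - 1) / 4 + c (n - 3) / 4"
proof -
  define q where "q = n - 3"
  have q: "n = q + 3" using assms by (simp add: q_def)
  show ?thesis unfolding q by (simp add: tr2_def eval_nat_numeral field_simps)
qed

lemma tt_two: "tr2 2 (tr2 2 c) 1 = c 2 / 2"
  by (simp add: tr2_def eval_nat_numeral)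

lemma key_alg:
  assumes per: "\<And>b. g (b + int n) = g b" and full: "\<And>b. Sg g b n = F"
    and n1: "1 \<le> n" and i: "i < n"
  shows "tr2 n (tr2 n (\<lambda>j. Sg g (lo j) j)) i
         = Sg g (lo i) i / 2 + Sg g (lo i - 1) i / 4 + Sg g (lo i + 1) i / 4"
proof -
  let ?N = "\<lambda>j. Sg g (lo j) j"
  consider "i = 0" | "i = 1" "n = 2" | "i = 1" "n \<ge> 3" | "i \<ge> 2" "i + 2 \<le> n" | "i \<ge> 2" "i = n - 1"
    using i n1 by linarith
  then show ?thesis
  proof cases
    case 1 then show ?thesis by (simp add: tr2_def Sg_0)
  next
    case 2
    have "g (-1) = g 1" using per[of "-1"] 2 by simp
    then show ?thesis using 2 tt_two[of ?N]
      by (simp add: Sg_def lo_def eval_nat_numeral)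
  next
    case 3
    then show ?thesis using tt_one[OF 3(2), of ?N]
      by (simp add: Sg_def lo_def eval_nat_numeral field_simps)
  next
    case 4
    define p where "p = i - 2"
    have p: "i = Suc (Suc p)" using 4 by (simp add: p_def)
    define a where "a = lo i"
    have l2: "lo (i + 2) = a - 1" by (simp add: a_def lo_SS[symmetric])
    have l3: "lo (i - 2) = a + 1" by (simp add: a_def p lo_SS)
    have e1: "Sg g (a - 1) (i + 2) = Sg g (a - 1) i + g (a - 1 + int i) + g (a + int i)"
      by (simp add: Sg_Suc algebra_simps)
    have e2: "Sg g (a + 1) i = Sg g (a + 1) p + g (a - 1 + int i) + g (a + int i)"
      unfolding p by (simp add: Sg_Suc algebra_simps)
    show ?thesis unfolding tt_mid[OF 4] l2 l3 a_def[symmetric]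
      using e1 e2 p by (simp add: field_simps)
  next
    case 5
    define q where "q = n - 3"
    have q: "n = q + 3" using 5 i by (simp add: q_def)
    have iq: "i = q + 2" using 5 q by simp
    define a where "a = lo i"
    have lq: "lo q = a + 1" by (simp add: a_def iq lo_SS)
    have gn: "\<And>b. g (b + int q + 3) = g b" using per unfolding q by (simp add: algebra_simps)
    have f1: "Sg g (a - 1) (q + 3) = Sg g (a - 1) (q + 2) + g (a - 2)"
      using gn[of "a - 2"] by (simp add: Sg_Suc eval_nat_numeral algebra_simps)
    have f2: "Sg g (a + 1) (q + 3) = Sg g (a + 1) (q + 2) + g a"
      using gn[of "a"] by (simp add: Sg_Suc eval_nat_numeral algebra_simps)
    have f3: "Sg g (a + 1) (q + 3) = Sg g (a + 1) q + g (a - 2) + g (a - 1) + g a"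
      using gn[of "a"] gn[of "a - 1"] gn[of "a - 2"] by (simp add: Sg_Suc eval_nat_numeral algebra_simps)
    have f4: "Sg g a (q + 3) = Sg g a (q + 2) + g (a - 1)"
      using gn[of "a - 1"] by (simp add: Sg_Suc eval_nat_numeral algebra_simps)
    have F: "Sg g (a - 1) (q + 3) = F" "Sg g (a + 1) (q + 3) = F" "Sg g a (q + 3) = F"
      "Sg g (lo n) n = F" using full q by auto
    have "tr2 n (tr2 n ?N) i = ?N n / 2 + ?N (n - 1) / 4 + ?N (n - 3) / 4"
      using tt_last[of n ?N] q iq by simp
    also have "\<dots> = F / 2 + Sg g a (q + 2) / 4 + Sg g (a + 1) q / 4"
      using F q iq lq by (simp add: a_def)
    finally show ?thesis using f1 f2 f3 f4 F iq unfolding a_def[symmetric] by (simp add: field_simps)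
  qed
qed


lemma key:
  assumes n1: "1 \<le> n" and i: "i < n"
  shows "tr2 n (tr2 n (\<lambda>j. sum f (Tn n j))) i = sum (Pstep n f) (Tn n i)"
proof -
  let ?g = "G n f"
  have c: "tr2 n (\<lambda>j. sum f (Tn n j)) = tr2 n (\<lambda>j. Sg ?g (lo j) j)"
    by (rule tr2_cong) (simp add: Tn_sum[OF n1] Sg_def)
  have full: "\<And>b. Sg ?g b n = sum f {0..<n}" using G_full[OF n1] by (simp add: Sg_def)
  have "tr2 n (tr2 n (\<lambda>j. sum f (Tn n j))) i
       = Sg ?g (lo i) i / 2 + Sg ?g (lo i - 1) i / 4 + Sg ?g (lo i + 1) i / 4"
    unfolding c by (rule key_alg[OF G_per full n1 i])
  also have "\<dots> = sum (Pstep n f) (Tn n i)"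
  proof -
    have "sum (Pstep n f) (Tn n i) = (\<Sum>k<i. G n (Pstep n f) (lo i + int k))"
      using Tn_sum[OF n1, of i] i by simp
    also have "\<dots> = (\<Sum>k<i. ?g (lo i + int k) / 2 + ?g (lo i - 1 + int k) / 4 + ?g (lo i + 1 + int k) / 4)"
      by (rule sum.cong) (simp_all add: G_P[OF n1] algebra_simps)
    also have "\<dots> = Sg ?g (lo i) i / 2 + Sg ?g (lo i - 1) i / 4 + Sg ?g (lo i + 1) i / 4"
      by (simp add: Sg_def sum.distrib sum_divide_distrib)
    finally show ?thesis by simp
  qed
  finally show ?thesis .
qed

lemma tr2_le: "(\<And>j. j \<le> n \<Longrightarrow> c j \<le> d j) \<Longrightarrow> tr2 n c j \<le> tr2 n d j"
proof -
  assume h: "\<And>j. j \<le> n \<Longrightarrow> c j \<le> d j"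
  show ?thesis
  proof (cases "j = 0 \<or> n \<le> j")
    case True then show ?thesis using h by (auto simp: tr2_def)
  next
    case False
    then have "c (Suc j) \<le> d (Suc j)" "c (j - 1) \<le> d (j - 1)" using h by auto
    then show ?thesis using False by (simp add: tr2_def)
  qed
qed

fun cseq :: "nat \<Rightarrow> nat \<Rightarrow> nat \<Rightarrow> nat \<Rightarrow> real" where
  "cseq n m 0 j = (if 1 \<le> j \<and> 1 \<le> m then 1 else 0)"
| "cseq n m (Suc t) j = tr2 n (tr2 n (cseq n m t)) (min j m)"

lemma cseq_Suc_fun: "cseq n m (Suc t) = (\<lambda>j. tr2 n (tr2 n (cseq n m t)) (min j m))"
  by (rule ext) simp

lemma cseq_shape:
  assumes n1: "1 \<le> n" and mn: "m \<le> n"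
  shows "cseq n m t 0 = 0 \<and> conc n (cseq n m t) \<and> monoc n (cseq n m t)"
proof (induction t)
  case 0
  have "conc n (cseq n m 0)" unfolding conc_def
  proof (intro allI impI)
    fix i :: nat assume "1 \<le> i" "i < n"
    then show "cseq n m 0 (Suc i) - cseq n m 0 i \<le> cseq n m 0 i - cseq n m 0 (i - 1)"
      by (cases "i = 1") auto
  qed
  moreover have "monoc n (cseq n m 0)" unfolding monoc_def by auto
  moreover have "cseq n m 0 0 = 0" by simp
  ultimately show ?case by blast
next
  case (Suc t)
  then have a: "cseq n m t 0 = 0" "conc n (cseq n m t)" "monoc n (cseq n m t)" by auto
  note P1 = tr2_props[OF n1 a]
  note P2 = tr2_props[OF n1 P1]
  note P3 = trunc_props[OF P2(2,3) mn]
  show ?case unfolding cseq_Suc_fun using P3 P2(1) by simp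
qed

lemma cseq_nonneg:
  assumes n1: "1 \<le> n" and mn: "m \<le> n" and j: "j \<le> n"
  shows "cseq n m t j \<ge> 0"
  using cseq_shape[OF n1 mn, of t] mono_le[of n "cseq n m t" 0 j] j by simp

lemma static_bound:
  assumes n1: "1 \<le> n" and mn: "m < n"
  defines "B \<equiv> {0..<n} - Tn n m"
  shows "\<forall>j\<le>n. cseq n m t j \<le> sum (killed n (\<lambda>_. B) 0 t) (Tn n j)"
proof (induction t)
  case 0
  show ?case
  proof (intro allI impI)
    fix j assume j: "j \<le> n"
    have nn: "\<And>y. killed n (\<lambda>_. B) 0 0 y \<ge> 0" by (rule killed_nonneg)
    show "cseq n m 0 j \<le> sum (killed n (\<lambda>_. B) 0 0) (Tn n j)"
    proof (cases "1 \<le> j \<and> 1 \<le> m")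
      case True
      have z: "0 \<in> Tn n j" using zero_T1[OF n1] Tn_mono[of 1 j n] True by auto
      have "0 \<in> Tn n m" using zero_T1[OF n1] Tn_mono[of 1 m n] True by auto
      then have "0 \<notin> B" unfolding B_def by simp
      then have "killed n (\<lambda>_. B) 0 0 0 = 1" by simp
      moreover have "killed n (\<lambda>_. B) 0 0 0 \<le> sum (killed n (\<lambda>_. B) 0 0) (Tn n j)"
        by (rule member_le_sum) (use z nn finite_subset[OF Tn_sub] in auto)
      ultimately show ?thesis using True by simp
    next
      case False
      then show ?thesis using sum_nonneg[of "Tn n j" "killed n (\<lambda>_. B) 0 0"] nn by auto
    qed
  qed
next
  case (Suc t)
  let ?nu = "killed n (\<lambda>_. B) 0 t"
  let ?N = "\<lambda>j. sum ?nu (Tn n j)"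
  show ?case
  proof (intro allI impI)
    fix j assume j: "j \<le> n"
    let ?i = "min j m"
    have i: "?i < n" using mn by simp
    have "cseq n m (Suc t) j = tr2 n (tr2 n (cseq n m t)) ?i" by simp
    also have "\<dots> \<le> tr2 n (tr2 n ?N) ?i"
    proof (rule tr2_le)
      fix j' assume "j' \<le> n"
      show "tr2 n (cseq n m t) j' \<le> tr2 n ?N j'"
        by (rule tr2_le) (use Suc in auto)
    qed
    also have "\<dots> = sum (Pstep n ?nu) (Tn n ?i)" by (rule key[OF n1 i])
    also have "\<dots> = sum (killed n (\<lambda>_. B) 0 (Suc t)) (Tn n j)"
    proof -
      have fin: "finite (Tn n j)" using finite_subset[OF Tn_sub] by auto
      have "sum (killed n (\<lambda>_. B) 0 (Suc t)) (Tn n j)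
          = sum (\<lambda>y. if y \<in> Tn n m then Pstep n ?nu y else 0) (Tn n j)"
      proof (rule sum.cong)
        fix y assume y: "y \<in> Tn n j"
        then have yn: "y < n" using Tn_sub[of n j] by auto
        show "killed n (\<lambda>_. B) 0 (Suc t) y = (if y \<in> Tn n m then Pstep n ?nu y else 0)"
          using lazy_sum[OF n1 yn] yn unfolding B_def by simp
      qed simp
      also have "\<dots> = sum (Pstep n ?nu) (Tn n j \<inter> Tn n m)"
        by (rule sum.inter_restrict[OF fin, symmetric])
      also have "Tn n j \<inter> Tn n m = Tn n ?i"
        using Tn_mono[of j m n] Tn_mono[of m j n] by (cases "j \<le> m") (auto simp: min_def)
      finally show ?thesis by simp
    qed
    finally show "cseq n m (Suc t) j \<le> sum (killed n (\<lambda>_. B) 0 (Suc t)) (Tn n j)" .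
  qed
qed

lemma moving_maj:
  assumes n1: "1 \<le> n" and mn: "m < n" and x: "x < n"
    and A: "\<And>t. A t \<subseteq> {0..<n}" and Ac: "\<And>t. n - m \<le> card (A t)"
  shows "Maj n (killed n A x t) (cseq n m t)"
proof (induction t)
  case 0
  show ?case unfolding Maj_def
  proof (intro allI impI)
    fix S assume S: "S \<subseteq> {0..<n}"
    have fin: "finite S" using S finite_subset by blast
    have e: "sum (killed n A x 0) S = (if x \<in> S \<and> x \<notin> A 0 then 1 else 0)"
    proof -
      have "sum (killed n A x 0) S = sum (\<lambda>y. if y = x then (if x \<notin> A 0 then 1 else 0) else 0) S"
        by (rule sum.cong) auto
      also have "\<dots> = (if x \<in> S \<and> x \<notin> A 0 then 1 else 0)" using fin by (simp add: sum.delta)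
      finally show ?thesis .
    qed
    show "sum (killed n A x 0) S \<le> cseq n m 0 (card S)"
    proof (cases "x \<in> S \<and> x \<notin> A 0")
      case True
      have c1: "card S \<ge> 1" using True fin by (metis card_0_eq empty_iff less_one not_less)
      have "A 0 \<subseteq> {0..<n} - {x}" using A[of 0] True by auto
      then have "card (A 0) \<le> n - 1" using card_mono[of "{0..<n} - {x}" "A 0"] x by simp
      then have "m \<ge> 1" using Ac[of 0] mn n1 by linarith
      with c1 show ?thesis using e True by simp
    next
      case False
      then have "sum (killed n A x 0) S = 0" using e by simp
      then show ?thesis by simp
    qed
  qed
next
  case (Suc t)
  note sh = cseq_shape[OF n1 less_imp_le[OF mn], of t]
  note P1 = tr2_props[OF n1 conjunct1[OF sh] conjunct1[OF conjunct2[OF sh]] conjunct2[OF conjunct2[OF sh]]]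
  note P2 = tr2_props[OF n1 P1]
  have MP: "Maj n (Pstep n (killed n A x t)) (tr2 n (tr2 n (cseq n m t)))"
    using Maj_P[OF n1 Suc] sh by blast
  show ?case unfolding Maj_def
  proof (intro allI impI)
    fix S assume S: "S \<subseteq> {0..<n}"
    have fin: "finite S" using S finite_subset by blast
    have "sum (killed n A x (Suc t)) S = sum (\<lambda>y. if y \<in> - A (Suc t) then Pstep n (killed n A x t) y else 0) S"
    proof (rule sum.cong)
      fix y assume "y \<in> S" then have "y < n" using S by auto
      then show "killed n A x (Suc t) y = (if y \<in> - A (Suc t) then Pstep n (killed n A x t) y else 0)"
        using lazy_sum[OF n1] by simp
    qed simp
    also have "\<dots> = sum (Pstep n (killed n A x t)) (S - A (Suc t))"
      unfolding Diff_eq by (rule sum.inter_restrict[OF fin, symmetric])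
    also have "\<dots> \<le> tr2 n (tr2 n (cseq n m t)) (card (S - A (Suc t)))"
    proof -
      have "S - A (Suc t) \<subseteq> {0..<n}" using S by blast
      then show ?thesis using MP unfolding Maj_def by blast
    qed
    also have "\<dots> \<le> tr2 n (tr2 n (cseq n m t)) (min (card S) m)"
    proof -
      have c1: "card (S - A (Suc t)) \<le> card S" using fin by (simp add: card_mono)
      have "card (S - A (Suc t)) \<le> card ({0..<n} - A (Suc t))" using S by (intro card_mono) auto
      also have "\<dots> = n - card (A (Suc t))" using A[of "Suc t"] by (simp add: card_Diff_subset finite_subset)
      also have "\<dots> \<le> m" using Ac[of "Suc t"] by linarith
      finally have "card (S - A (Suc t)) \<le> min (card S) m" using c1 by simp
      moreover have "min (card S) m \<le> n" using mn by simp
      ultimately show ?thesis using mono_le[OF P2(3)] by blast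
    qed
    finally show "sum (killed n A x (Suc t)) S \<le> cseq n m (Suc t) (card S)" by simp
  qed
qed

lemma moving_le:
  assumes n1: "1 \<le> n" and mn: "m < n" and x: "x < n"
    and A: "\<And>t. A t \<subseteq> {0..<n}" and Ac: "\<And>t. n - m \<le> card (A t)"
  shows "exp_hit n A x \<le> exp_hit n (\<lambda>_. {0..<n} - Tn n m) 0"
proof -
  have "(\<Sum>y<n. killed n A x t y) \<le> (\<Sum>y<n. killed n (\<lambda>_. {0..<n} - Tn n m) 0 t y)" for t
  proof -
    have "(\<Sum>y<n. killed n A x t y) \<le> cseq n m t n"
    proof -
      have "sum (killed n A x t) {0..<n} \<le> cseq n m t (card {0..<n})"
      proof -
        have M: "Maj n (killed n A x t) (cseq n m t)" by (rule moving_maj[OF n1 mn x A Ac])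
        show ?thesis using mp[OF spec[OF M[unfolded Maj_def], of "{0..<n}"]] by simp
      qed
      moreover have "sum (killed n A x t) {0..<n} = (\<Sum>y<n. killed n A x t y)"
        by (simp only: atLeast0LessThan)
      ultimately show ?thesis by simp
    qed
    also have "\<dots> \<le> sum (killed n (\<lambda>_. {0..<n} - Tn n m) 0 t) (Tn n n)"
    proof -
      have sb: "\<forall>j\<le>n. cseq n m t j \<le> sum (killed n (\<lambda>_. {0..<n} - Tn n m) 0 t) (Tn n j)"
        by (rule static_bound[OF n1 mn])
      show ?thesis using spec[OF sb, of n] by simp
    qed
    also have "\<dots> = (\<Sum>y<n. killed n (\<lambda>_. {0..<n} - Tn n m) 0 t y)"
      by (simp only: Tn_n[OF n1] atLeast0LessThan)
    finally show ?thesis .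
  qed
  then have "\<And>t. ennreal (\<Sum>y<n. killed n A x t y) \<le> ennreal (\<Sum>y<n. killed n (\<lambda>_. {0..<n} - Tn n m) 0 t y)"
    by (rule ennreal_leI)
  then show ?thesis unfolding exp_hit_def
    by (rule suminf_le) (rule summableI)+
qed


theorem corollary1p3:
  fixes n :: nat and \<alpha> :: real
  assumes "n \<ge> 1" and "0 < \<alpha>" and "\<alpha> < 1"
  shows "t_H n \<alpha> = t_mov n \<alpha>"
proof -
  have n1: "1 \<le> n" using assms(1) by simp
  define k where "k = nat \<lceil>\<alpha> * real n\<rceil>"
  define m where "m = n - k"
  have pos: "0 < \<alpha> * real n" using assms by simp
  then have cpos: "0 < \<lceil>\<alpha> * real n\<rceil>" by simp
  then have k1: "1 \<le> k" unfolding k_def by linarith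
  have "\<alpha> * real n \<le> real n" using assms by simp
  then have "\<lceil>\<alpha> * real n\<rceil> \<le> int n" by (simp add: ceiling_le_iff)
  then have kn: "k \<le> n" unfolding k_def by linarith
  have kge: "\<alpha> * real n \<le> real k"
    using le_of_int_ceiling[of "\<alpha> * real n"] cpos unfolding k_def by simp
  have mn: "m < n" unfolding m_def using k1 kn by simp
  have nmk: "n - m = k" unfolding m_def using kn by simp
  have cardk: "n - m \<le> card A" if A: "A \<subseteq> {0..<n}" and u: "\<alpha> \<le> unif n A" for A
  proof -
    have "A \<inter> {0..<n} = A" using A by blast
    then have "\<alpha> \<le> real (card A) / real n" using u by (simp add: unif_def)
    then have "\<alpha> * real n \<le> real (card A)" using n1 by (simp add: field_simps)
    then have "\<lceil>\<alpha> * real n\<rceil> \<le> int (card A)" by (simp add: ceiling_le_iff)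
    then have "k \<le> card A" unfolding k_def by linarith
    then show ?thesis using nmk by simp
  qed
  define B where "B = {0..<n} - Tn n m"
  have Bsub: "B \<subseteq> {0..<n}" unfolding B_def by blast
  have cB: "card B = k"
    unfolding B_def using Tn_sub[of n m] Tn_card[OF n1, of m] mn nmk
    by (simp add: card_Diff_subset finite_subset)
  have uB: "\<alpha> \<le> unif n B"
  proof -
    have "B \<inter> {0..<n} = B" using Bsub by blast
    then have "unif n B = real k / real n" by (simp add: unif_def cB)
    moreover have "real n > 0" using n1 by simp
    ultimately show ?thesis using kge by (simp add: pos_le_divide_eq)
  qed
  have stat: "exp_hit n (\<lambda>_. B) 0 \<le> t_H n \<alpha>"
    unfolding t_H_def
    by (rule SUP_upper2[of "(0, B)"]) (use n1 Bsub uB in auto)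
  have "t_mov n \<alpha> \<le> t_H n \<alpha>"
    unfolding t_mov_def
  proof (rule SUP_least)
    fix p :: "nat \<times> (nat \<Rightarrow> nat set)" assume p: "p \<in> {(x, A). x < n \<and> (\<forall>t. A t \<subseteq> {0..<n} \<and> \<alpha> \<le> unif n (A t))}"
    then obtain x and A :: "nat \<Rightarrow> nat set" where pe: "p = (x, A)" and x: "x < n" and
      A: "\<And>t. A t \<subseteq> {0..<n}" and uA: "\<And>t. \<alpha> \<le> unif n (A t)" by blast
    have Ac: "\<And>t. n - m \<le> card (A t)" using cardk A uA by blast
    have "exp_hit n A x \<le> exp_hit n (\<lambda>_. B) 0"
      unfolding B_def by (rule moving_le[OF n1 mn x A Ac])
    then show "(case p of (x, A) \<Rightarrow> exp_hit n A x) \<le> t_H n \<alpha>" using stat pe by simp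
  qed
  moreover have "t_H n \<alpha> \<le> t_mov n \<alpha>"
    unfolding t_H_def
  proof (rule SUP_least)
    fix p assume p: "p \<in> {(x, B). x < n \<and> B \<subseteq> {0..<n} \<and> \<alpha> \<le> unif n B}"
    then obtain x C where pe: "p = (x, C)" and x: "x < n" and C: "C \<subseteq> {0..<n}" "\<alpha> \<le> unif n C" by blast
    have "exp_hit n (\<lambda>_. C) x \<le> t_mov n \<alpha>"
      unfolding t_mov_def
      by (rule SUP_upper2[of "(x, \<lambda>_. C)"]) (use x C in auto)
    then show "(case p of (x, B) \<Rightarrow> exp_hit n (\<lambda>_. B) x) \<le> t_mov n \<alpha>" using pe by simp
  qed
  ultimately show ?thesis by (rule antisym[rotated])
qed

end
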